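(* For $t\in(0,1)$ put $c_t:=\frac{4}{4t-t^3}$ and $$K_t(z,P):=\frac{z-\tilde Z(P)}{\bar z-Z(P)}\,e^{-c_t\cosh\mathrm{dist}(z,P)},\qquad z\in\mathbb H,\ P\in\mathcal G_1.$$ Then: (1) $\Phi_t(z,P)=\log K_t(z,P)$ admits a single-valued (continuous) branch for $z\in\mathbb H$, $P\in\mathcal G_1$; (2) for fixed $z\in\mathbb H$ and $\theta\in\mathbb R/2\pi\mathbb Z$, $\max_{P\in\Sigma_{t,\theta}}|K_t(z,P)|$ is attained at $P=h_{-it}(z,\theta)$; (3) for fixed $z_0\in\mathbb H$ and $\theta$, the Hessian matrix with respect to $(x,y)$ of $(x,y)\mapsto\Re\Phi_t(z_0,h_{-it}(x+iy,\theta))$ is non-degenerate at $x+iy=z_0$.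
   Context: $\mathbb H=\{x+iy:y>0\}$ hyperbolic plane; $\mathbb H^{\mathbb C}=\mathbb C\times\mathbb C\ni P=(X(P),Y(P))$, $\mathbb H$ embedded as real points $(x,y)$, $y>0$; $Z(P):=X(P)+iY(P)$, $\tilde Z(P):=X(P)-iY(P)$. For $z=x+iy\in\mathbb H$ and $P$ with $Y(P)\ne0$, $\cosh\mathrm{dist}(z,P):=1+\frac{(x-X(P))^2+(y-Y(P))^2}{2yY(P)}$ (holomorphic in $P$). Horocycles: for $z=x+iy\in\mathbb H$, $\theta\in\mathbb R/2\pi\mathbb Z$, $h_t(z,\theta)$ ($t$ real) is the point at time $t$ of the unique unit-speed right horocycle (image of $t\mapsto -t+i$ under an orientation-preserving isometry) starting at $z$ with velocity $y(\cos\theta\partial_x+\sin\theta\partial_y)$, written as $(\Re,\Im)\in\mathbb R^2$; it extends holomorphically in $t$ to $|\Im t|<1$ with values in $\mathbb C^2$. $\mathcal G_1:=\{h_{-is}(z,\theta): s\in[0,1),z\in\mathbb H,\theta\}$ (an open neighbourhood of $\mathbb H$ in $\mathbb C^2$), and $\Sigma_{t,\theta}:=\{h_{-it}(z,\theta):z\in\mathbb H\}$. *)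

theory Defs
  imports "HOL-Analysis.Analysis"
begin

text \<open>Points of the complexified hyperbolic plane are pairs P = (X P, Y P) of complex numbers.\<close>

type_synonym cpt = "complex \<times> complex"

definition Hpl :: "complex set" where
  "Hpl = {z. Im z > 0}"

definition ZZ :: "cpt \<Rightarrow> complex" where
  "ZZ P = fst P + \<i> * snd P"

definition ZZt :: "cpt \<Rightarrow> complex" where
  "ZZt P = fst P - \<i> * snd P"

definition coshdist :: "complex \<Rightarrow> cpt \<Rightarrow> complex" where
  "coshdist z P = 1 + ((of_real (Re z) - fst P)\<^sup>2 + (of_real (Im z) - snd P)\<^sup>2)
                       / (2 * of_real (Im z) * snd P)"

text \<open>Unit speed right horocycle through z with initial velocity y(cos th d_x + sin th d_y):
  for real t the point is z + w(t) with
  w(t) = i y (t(1 - e^{i th}) - 2i) / (t(1 + e^{i th}) - 2i)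
  (this is g(-t+i) for the orientation preserving isometry g with g(i) = z,
  g'(i)(-1) = y e^{i th}).  Its real coordinates are X = Re z + Re w, Y = Im w; the
  holomorphic extension in t replaces the conjugate of w(t) by the function with conjugated
  coefficients, which is holomorphic for |Im t| < 1.\<close>
definition hor :: "complex \<Rightarrow> real \<Rightarrow> complex \<Rightarrow> cpt" where
  "hor z th t =
     (let e = cis th;
          w  = \<i> * of_real (Im z) * (t * (1 - e) - 2 * \<i>) / (t * (1 + e) - 2 * \<i>);
          w' = - \<i> * of_real (Im z) * (t * (1 - cnj e) + 2 * \<i>) / (t * (1 + cnj e) + 2 * \<i>)
      in (of_real (Re z) + (w + w') / 2, (w - w') / (2 * \<i>)))"

definition G1 :: "cpt set" where
  "G1 = {hor z th (- \<i> * of_real s) | z th s. s \<in> {0..<1} \<and> z \<in> Hpl}"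

definition Sigma_ht :: "real \<Rightarrow> real \<Rightarrow> cpt set" where
  "Sigma_ht t th = {hor z th (- \<i> * of_real t) | z. z \<in> Hpl}"

definition ct :: "real \<Rightarrow> real" where
  "ct t = 4 / (4 * t - t ^ 3)"

definition Kt :: "real \<Rightarrow> complex \<Rightarrow> cpt \<Rightarrow> complex" where
  "Kt t z P = (z - ZZt P) / (cnj z - ZZ P) * exp (- of_real (ct t) * coshdist z P)"

definition nondeg_hessian_at :: "(real \<times> real \<Rightarrow> real) \<Rightarrow> real \<times> real \<Rightarrow> bool" where
  "nondeg_hessian_at g p \<longleftrightarrow>
     (\<exists>D :: real \<times> real \<Rightarrow> ((real \<times> real) \<Rightarrow>\<^sub>L real).
      \<exists>H :: real \<times> real \<Rightarrow> ((real \<times> real) \<Rightarrow>\<^sub>L real).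
        (\<forall>\<^sub>F q in nhds p. (g has_derivative blinfun_apply (D q)) (at q)) \<and>
        (D has_derivative H) (at p) \<and>
        blinfun_apply (H (1,0)) (1,0) * blinfun_apply (H (0,1)) (0,1)
          - blinfun_apply (H (1,0)) (0,1) * blinfun_apply (H (0,1)) (1,0) \<noteq> 0)"

end

theory Submission imports Defs "HOL-Library.Sum_of_Squares" begin

lemma ln_le_pade:
  fixes x :: real assumes "0 < x" "x \<le> 1"
  shows "ln x \<le> 2 * (x - 1) / (x + 1)"
proof -
  define f where "f y = ln y - 2 * (y - 1) / (y + 1)" for y :: real
  have "f x \<le> f 1"
  proof (rule DERIV_nonneg_imp_increasing_open[OF assms(2)])
    fix y :: real assume y: "x < y" "y < 1"
    hence yp: "0 < y" using assms by linarith
    have "DERIV f y :> 1 / y - (2 * (y + 1) - 2 * (y - 1) * 1) / (y + 1)^2"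
      unfolding f_def using yp
      by (intro derivative_eq_intros) (auto simp: power2_eq_square)
    moreover have "(2 * (y + 1) - 2 * (y - 1) * 1) / (y + 1)^2 = 4 / (y+1)^2"
      by simp
    moreover have "1 / y - 4 / (y + 1)^2 \<ge> 0"
    proof -
      have "0 \<le> (y - 1)^2" by simp
      hence "4 * y \<le> (y + 1)^2" by (simp add: power2_eq_square algebra_simps)
      hence "4 / (y+1)^2 \<le> 1 / y" using yp by (simp add: field_simps)
      thus ?thesis by simp
    qed
    ultimately show "\<exists>d. DERIV f y :> d \<and> 0 \<le> d" by auto
  next
    show "continuous_on {x..1} f" unfolding f_def using assms
      by (intro continuous_intros) auto
  qed
  moreover have "f 1 = 0" by (simp add: f_def)
  ultimately show ?thesis by (simp add: f_def)
qed


lemma p3_nonneg: fixes s :: real assumes "0 \<le> s" "s \<le> 1"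
  shows "0 \<le> - (s^6) + 2 * s^5 + 7 * s^4 - 8 * s^3 - 16 * s^2 + 16"
proof -
  have e: "- (s^6) + 2 * s^5 + 7 * s^4 - 8 * s^3 - 16 * s^2 + 16 = (1 - s) * (s^5 - s^4 - 8 * s^3 + 16 * s + 16)"
    by algebra
  have "s^4 \<le> 1" using assms by (simp add: power_le_one)
  moreover have "s^3 \<le> s"
  proof -
    have "s^2 \<le> 1" using assms by (simp add: power_le_one)
    hence "s * s^2 \<le> s" using mult_left_le[OF _ assms(1)] by blast
    thus ?thesis by (simp add: power3_eq_cube power2_eq_square mult.assoc)
  qed
  moreover have "0 \<le> s^5" using assms by simp
  ultimately have "0 \<le> s^5 - s^4 - 8 * s^3 + 16 * s + 16" using assms by linarith
  thus ?thesis unfolding e using assms by simp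
qed



lemma p1_nonneg: fixes s :: real assumes "0 \<le> s" "s \<le> 1" shows "0 \<le> 3 * s^4 - 2 * s^3 - 8 * s^2 - 8 * s + 16"
  using assms by sos
lemma c1_nonneg: fixes r g :: real assumes "0 \<le> r" "r \<le> 1" "0 \<le> g" "g \<le> 1"
  shows "0 \<le> (4 * g+16) * r^2 + r * (-6 * g^2+16 * g-32) + (6 * g^2-32 * g+32) + 16 * r * (1-r)"
  using assms by sos
lemma q_nonneg: fixes r g :: real assumes r: "0 \<le> r" "r \<le> 1" and g: "0 \<le> g" "g \<le> 1"
  shows "8 * (1-r)^2 \<le> (32 - 32 * g + 14 * g^2 - 2 * g^3) - r * (32 - 16 * g + 6 * g^2) + r^2 * (8 + 2 * g)"
proof -
  define C where "C = 24 - 32 * g + 14 * g^2 - 2 * g^3"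
  define h1 where "h1 = 2 * (1-g) * (4 - 3 * g + g^2)"
  have id: "(32 - 32 * g + 14 * g^2 - 2 * g^3) - r * (32 - 16 * g + 6 * g^2) + r^2 * (8 + 2 * g) - 8 * (1-r)^2
     = (1-r) * (C - 2 * g * r) + r * h1"
    unfolding C_def h1_def by algebra
  have g3: "g^3 \<le> g^2" using g by (simp add: power_decreasing)
  have "C - 2 * g \<ge> 2 * (3 - 2 * g) * (4 - 3 * g)"
    unfolding C_def using g3 by (simp add: algebra_simps power2_eq_square)
  moreover have "0 \<le> 2 * (3 - 2 * g) * (4 - 3 * g)" using g by simp
  moreover have "2 * g * r \<le> 2 * g" using r g by (simp add: mult_left_le)
  ultimately have "0 \<le> C - 2 * g * r" by linarith
  moreover have "0 \<le> h1"
  proof -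
    have "0 \<le> g^2" by simp
    hence "0 \<le> 4 - 3 * g + g^2" using g by linarith
    thus ?thesis unfolding h1_def using g by simp
  qed
  ultimately have "0 \<le> (1-r) * (C - 2 * g * r) + r * h1" using r by simp
  thus ?thesis using id by linarith
qed



lemma P3_ineq:
  fixes U v s :: real
  assumes U: "0 \<le> U" and v: "0 < v" and s: "0 < s" "s < 1"
    and G: "0 \<le> 2 * U + (v-1) * (2 * v+2-s^2)"
  shows "s^2 * (4-s^2) * v * (2 * U + (v-1) * (2 * v+2-s^2)) \<le> ((U + (v+1+s)^2) * (2-s)^2) * (U + (v-1) * (v-1+s^2))"
proof (cases "1 \<le> v")
  case True
  define r where "r = v - 1"
  have r: "0 \<le> r" using True r_def by simp
  have vr: "v = r + 1" using r_def by simp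
  define p1 where "p1 = 3 * s^4 - 2 * s^3 - 8 * s^2 - 8 * s + 16"
  define p2 where "p2 = 3 * s^4 - 16 * s^2 + 16"
  define p3 where "p3 = - (s^6) + 2 * s^5 + 7 * s^4 - 8 * s^3 - 16 * s^2 + 16"
  have id: "((U + (v+1+s)^2) * (2-s)^2) * (U + (v-1) * (v-1+s^2)) - s^2 * (4-s^2) * v * (2 * U + (v-1) * (2 * v+2-s^2))
     = (2-s)^2 * U^2 + U * (2 * (2-s)^2 * r^2 + r * p1 + p2) + r^2 * ((2-s)^2 * r^2 + r * p1 + p3)"
    unfolding vr p1_def p2_def p3_def by algebra
  have hp1: "0 \<le> p1" unfolding p1_def using p1_nonneg[of s] s by simp
  have hp3: "0 \<le> p3" unfolding p3_def using p3_nonneg[of s] s by simp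
  have hp2: "0 \<le> p2"
  proof -
    have "s^2 \<le> 1" using s by (simp add: power_le_one)
    moreover have "0 \<le> s^4" by simp
    ultimately show ?thesis unfolding p2_def by linarith
  qed
  have "0 \<le> (2-s)^2 * U^2 + U * (2 * (2-s)^2 * r^2 + r * p1 + p2) + r^2 * ((2-s)^2 * r^2 + r * p1 + p3)"
    using U r hp1 hp2 hp3 by (intro add_nonneg_nonneg mult_nonneg_nonneg) auto
  thus ?thesis using id by linarith
next
  case False
  define r where "r = 1 - v"
  have r: "0 < r" "r < 1" using False v r_def by auto
  define E where "E = U + (v-1) * (v-1+s^2)"
  define Gg where "Gg = 2 * U + (v-1) * (2 * v+2-s^2)"
  define d where "d = (U + (v+1+s)^2) * (2-s)^2"
  define ka where "ka = s^2 * (4-s^2) * v"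
  have EG: "2 * E - Gg = (1-v) * (4-3 * s^2)" unfolding E_def Gg_def by algebra
  have s2: "s^2 \<le> 1" "0 \<le> s^2" using s by (auto simp: power_le_one)
  have "0 \<le> (1 - v) * (4 - 3 * s^2)" using False s2 by (intro mult_nonneg_nonneg) auto
  hence "2 * E \<ge> Gg" using EG by linarith
  have dpos: "0 \<le> d" unfolding d_def using U by simp
  have sq: "(v+1+s)^2 - v * (2+s)^2 = (1-v) * ((2+s) * s + 1 - v)" by algebra
  have "0 \<le> (2 + s) * s" using s by simp
  hence "0 \<le> (2 + s) * s + 1 - v" using False by linarith
  hence "0 \<le> (1 - v) * ((2 + s) * s + 1 - v)" using False by simp
  hence "(v+1+s)^2 \<ge> v * (2+s)^2" using sq by linarith
  hence "d \<ge> v * (2+s)^2 * (2-s)^2" unfolding d_def using U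
    by (smt (verit) mult_right_mono zero_le_power2)
  also have "v * (2+s)^2 * (2-s)^2 = v * (4-s^2) * (4-s^2)" by algebra
  also have "v * (4-s^2) * (4-s^2) \<ge> v * (4-s^2) * (2 * s^2)"
    using v s2 by (intro mult_left_mono) auto
  finally have d2: "d \<ge> 2 * ka" unfolding ka_def by (simp add: algebra_simps)
  have "d * E \<ge> d * (Gg/2)" using \<open>2 * E \<ge> Gg\<close> dpos by (intro mult_left_mono) auto
  moreover have "d * (Gg/2) \<ge> ka * Gg"
  proof -
    have "0 \<le> Gg" using G unfolding Gg_def .
    hence "(2 * ka) * Gg \<le> d * Gg" using d2 by (intro mult_right_mono) auto
    thus ?thesis by simp
  qed
  ultimately have "ka * Gg \<le> d * E" by linarith
  thus ?thesis unfolding ka_def Gg_def d_def E_def .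
qed

lemma P1_ineq:
  fixes U v s :: real
  assumes U: "0 \<le> U" and v: "0 < v" "v < 1" and s: "0 < s" "s < 1"
  shows "2 * s^2 * (4-s^2) * v * (2 * U + (v-1) * (2 * v+2-s^2))
     \<le> (U + (v-1) * (v-1+s^2)) * ((U + (v+1-s)^2) * (2+s)^2 + (U + (v+1+s)^2) * (2-s)^2)"
proof -
  define r where "r = 1 - v"
  have r: "0 \<le> r" "r \<le> 1" using v r_def by auto
  have vr: "v = 1 - r" using r_def by simp
  define g where "g = s^2"
  have g: "0 \<le> g" "g \<le> 1" using s g_def by (auto simp: power_le_one)
  define c1 where "c1 = (4 * g+16) * r^2 + r * (-6 * g^2+16 * g-32) + (6 * g^2-32 * g+32)"
  define q where "q = (32 - 32 * g + 14 * g^2 - 2 * g^3) - r * (32 - 16 * g + 6 * g^2) + r^2 * (8 + 2 * g)"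
  have id: "(U + (v-1) * (v-1+s^2)) * ((U + (v+1-s)^2) * (2+s)^2 + (U + (v+1+s)^2) * (2-s)^2)
       - 2 * s^2 * (4-s^2) * v * (2 * U + (v-1) * (2 * v+2-s^2))
     = 2 * g * U^2 + 8 * (U - r * (1-r))^2 + U * (c1 + 16 * r * (1-r)) + r^2 * (q - 8 * (1-r)^2)"
    unfolding vr c1_def q_def g_def by algebra
  have "0 \<le> c1 + 16 * r * (1-r)" unfolding c1_def using c1_nonneg[OF r g] by simp
  moreover have "0 \<le> q - 8 * (1-r)^2" unfolding q_def using q_nonneg[OF r g] by simp
  ultimately have t3: "0 \<le> U * (c1 + 16 * r * (1 - r))" and t4: "0 \<le> r^2 * (q - 8 * (1 - r)^2)"
    using U by auto
  have t1: "0 \<le> 2 * g * U^2" using g by simp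
  have t2: "0 \<le> 8 * (U - r * (1 - r))^2" by simp
  have "0 \<le> 2 * g * U^2 + 8 * (U - r * (1 - r))^2 + U * (c1 + 16 * r * (1 - r)) + r^2 * (q - 8 * (1 - r)^2)"
    using t1 t2 t3 t4 by linarith
  thus ?thesis using id by linarith
qed




lemma ct_alt: "ct s = 4 / (s * (4 - s^2))"
  unfolding ct_def by (simp add: algebra_simps power2_eq_square power3_eq_cube)

lemma key_ineq:
  fixes U v s :: real
  assumes U: "0 \<le> U" and v: "0 < v" and s: "0 < s" "s < 1"
  shows "ln ((U + (v + 1 - s)^2) / (U + (v + 1 + s)^2)) - ct s * ((U + v^2 + 1 - s^2) / v)
     \<le> ln ((2 - s)^2 / (2 + s)^2) - ct s * (2 - s^2)"
proof -
  define A where "A = (v + 1 - s)^2"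
  define B where "B = (v + 1 + s)^2"
  define A1 where "A1 = (2 - s)^2"
  define B1 where "B1 = (2 + s)^2"
  have Ap: "A > 0" unfolding A_def using v s by simp
  have Bp: "B > 0" unfolding B_def using v s by simp
  have A1p: "A1 > 0" unfolding A1_def using s by simp
  have B1p: "B1 > 0" unfolding B1_def using s by simp
  define n where "n = (U + A) * B1"
  define d where "d = (U + B) * A1"
  have np: "n > 0" unfolding n_def using U Ap B1p by simp
  have dp: "d > 0" unfolding d_def using U Bp A1p by simp
  define E where "E = U + (v - 1) * (v - 1 + s^2)"
  define G where "G = 2 * U + (v - 1) * (2 * v + 2 - s^2)"
  define k where "k = s * (4 - s^2)"
  have s2: "s^2 < 1" using s by (simp add: power_less_one_iff abs_less_iff)
  have kp: "k > 0" unfolding k_def using s s2 by simp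
  have ctk: "ct s = 4 / k" unfolding k_def by (rule ct_alt)
  have split: "(U + A) / (U + B) = (n / d) * (A1 / B1)"
  proof -
    have "(n / d) * (A1 / B1) = ((U + A) * (A1 * B1)) / ((U + B) * (A1 * B1))"
      unfolding n_def d_def by (simp add: ac_simps)
    also have "\<dots> = (U + A) / (U + B)"
      using A1p B1p by (intro nonzero_mult_divide_mult_cancel_right) simp
    finally show ?thesis by simp
  qed
  have lnsplit: "ln ((U + A) / (U + B)) = ln (n / d) + ln (A1 / B1)"
    unfolding split using np dp A1p B1p by (subst ln_mult) auto
  have rhs: "ct s * ((U + v^2 + 1 - s^2) / v) - ct s * (2 - s^2) = 4 * E / (k * v)"
  proof -
    have "(U + v^2 + 1 - s^2) / v - (2 - s^2) = E / v"
      unfolding E_def using v by (simp add: field_simps power2_eq_square)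
    hence "ct s * ((U + v^2 + 1 - s^2) / v) - ct s * (2 - s^2) = ct s * (E / v)"
      by (metis right_diff_distrib)
    thus ?thesis unfolding ctk by simp
  qed
  have nd: "n - d = 4 * s * G" unfolding n_def d_def A_def B_def A1_def B1_def G_def by algebra
  have main: "ln (n / d) \<le> 4 * E / (k * v)"
  proof (cases "0 \<le> G")
    case True
    have P3: "s^2 * (4 - s^2) * v * G \<le> d * E"
      using P3_ineq[OF U v s True[unfolded G_def]] unfolding d_def B_def A1_def G_def E_def by simp
    have "ln (n / d) \<le> n / d - 1" using np dp by (intro ln_le_minus_one) simp
    also have "n / d - 1 = 4 * s * G / d" using dp nd by (simp add: field_simps)
    also have "4 * s * G / d \<le> 4 * E / (k * v)"
    proof -
      have "4 * s * G * (k * v) \<le> 4 * E * d" using P3 unfolding k_def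
        by (simp add: algebra_simps power2_eq_square)
      hence "4 * s * G \<le> 4 * E / (k * v) * d" using kp v by (simp add: field_simps)
      thus ?thesis using dp by (simp add: pos_divide_le_eq)
    qed
    finally show ?thesis .
  next
    case False
    have "n < d" using nd False s by (smt (verit) mult_pos_neg)
    have v1: "v < 1"
    proof (rule ccontr)
      assume "\<not> v < 1"
      hence "0 \<le> (v - 1) * (2 * v + 2 - s^2)" using s2 by (intro mult_nonneg_nonneg) auto
      thus False using False U unfolding G_def by linarith
    qed
    have P1: "2 * s^2 * (4 - s^2) * v * G \<le> E * (n + d)"
      using P1_ineq[OF U v v1 s] unfolding n_def d_def A_def B_def A1_def B1_def G_def E_def by simp
    have xle: "n / d \<le> 1" using \<open>n < d\<close> dp by simp
    have "ln (n / d) \<le> 2 * (n / d - 1) / (n / d + 1)" using np dp xle by (intro ln_le_pade) auto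
    also have "2 * (n / d - 1) / (n / d + 1) = 8 * s * G / (n + d)"
      using dp np nd by (simp add: field_simps)
    also have "8 * s * G / (n + d) \<le> 4 * E / (k * v)"
    proof -
      have "8 * s * G * (k * v) \<le> 4 * E * (n + d)" using P1 unfolding k_def
        by (simp add: algebra_simps power2_eq_square)
      hence "8 * s * G \<le> 4 * E / (k * v) * (n + d)" using kp v by (simp add: field_simps)
      thus ?thesis using dp np by (simp add: pos_divide_le_eq)
    qed
    finally show ?thesis .
  qed
  have "ln ((U + A) / (U + B)) - ct s * ((U + v^2 + 1 - s^2) / v) - (ln (A1 / B1) - ct s * (2 - s^2))
      = ln (n / d) - 4 * E / (k * v)" using lnsplit rhs by simp
  with main show ?thesis unfolding A_def B_def A1_def B1_def by linarith
qed




definition a0 :: "real \<Rightarrow> real \<Rightarrow> complex" where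
  "a0 s th = \<i> * (2 + of_real s - of_real s * cis th) / (2 + of_real s + of_real s * cis th)"
definition b0 :: "real \<Rightarrow> real \<Rightarrow> complex" where
  "b0 s th = - \<i> * (2 - of_real s + of_real s * cnj (cis th)) / (2 - of_real s - of_real s * cnj (cis th))"

lemma den_a0_nz: fixes s :: real assumes "0 \<le> s" shows "(2 + of_real s + of_real s * cis th :: complex) \<noteq> 0"
proof
  assume "(2 + of_real s + of_real s * cis th :: complex) = 0"
  hence "Re (2 + of_real s + of_real s * cis th) = 0" by simp
  moreover have "Re (2 + of_real s + of_real s * cis th) = 2 + s + s * cos th" by simp
  moreover have "s * cos th \<ge> - s" using assms cos_ge_minus_one[of th]
    by (metis minus_mult_right mult.commute mult_left_mono mult_minus1_right)
  ultimately show False using assms by linarith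
qed

lemma den_b0_nz: fixes s :: real assumes "0 \<le> s" "s < 1" shows "(2 - of_real s - of_real s * cnj (cis th) :: complex) \<noteq> 0"
proof
  assume "(2 - of_real s - of_real s * cnj (cis th) :: complex) = 0"
  hence "Re (2 - of_real s - of_real s * cnj (cis th)) = 0" by simp
  moreover have "Re (2 - of_real s - of_real s * cnj (cis th)) = 2 - s - s * cos th" by simp
  moreover have "s * cos th \<le> s" using assms cos_le_one[of th]
    by (simp add: mult_left_le)
  ultimately show False using assms by linarith
qed

lemma cancel_c: "(c::complex) \<noteq> 0 \<Longrightarrow> a * (c * N) / (c * D) = a * N / D"
  by (cases "D = 0") (simp_all add: field_simps)

lemma hor_ZZ:
  fixes s :: real
  assumes "0 \<le> s" "s < 1"
  shows "ZZ (hor z th (- \<i> * of_real s)) = Re z + Im z * a0 s th"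
    and "ZZt (hor z th (- \<i> * of_real s)) = Re z + Im z * b0 s th"
proof -
  define e where "e = cis th"
  have d1: "(2 + of_real s + of_real s * e :: complex) \<noteq> 0" using den_a0_nz[OF assms(1)] e_def by simp
  have d2: "(2 - of_real s - of_real s * cnj e :: complex) \<noteq> 0" using den_b0_nz[OF assms] e_def by simp
  have w: "\<i> * of_real (Im z) * (- \<i> * of_real s * (1 - e) - 2 * \<i>) / (- \<i> * of_real s * (1 + e) - 2 * \<i>)
      = Im z * a0 s th"
  proof -
    have q1: "- \<i> * of_real s * (1 + e) - 2 * \<i> = - \<i> * (2 + of_real s + of_real s * e)" by (simp add: algebra_simps)
    have q2: "- \<i> * of_real s * (1 - e) - 2 * \<i> = - \<i> * (2 + of_real s - of_real s * e)" by (simp add: algebra_simps)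
    show ?thesis unfolding q1 q2 a0_def e_def[symmetric] 
      by (subst cancel_c) (simp_all add: field_simps)
  qed
  have w': "- \<i> * of_real (Im z) * (- \<i> * of_real s * (1 - cnj e) + 2 * \<i>) / (- \<i> * of_real s * (1 + cnj e) + 2 * \<i>)
      = Im z * b0 s th"
  proof -
    have q1: "- \<i> * of_real s * (1 + cnj e) + 2 * \<i> = \<i> * (2 - of_real s - of_real s * cnj e)" by (simp add: algebra_simps)
    have q2: "- \<i> * of_real s * (1 - cnj e) + 2 * \<i> = \<i> * (2 - of_real s + of_real s * cnj e)" by (simp add: algebra_simps)
    show ?thesis unfolding q1 q2 b0_def e_def[symmetric]
      by (subst cancel_c) (simp_all add: field_simps)
  qed
  show "ZZ (hor z th (- \<i> * of_real s)) = Re z + Im z * a0 s th"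
    unfolding ZZ_def hor_def Let_def e_def[symmetric] using w w'
    by (simp add: field_simps)
  show "ZZt (hor z th (- \<i> * of_real s)) = Re z + Im z * b0 s th"
    unfolding ZZt_def hor_def Let_def e_def[symmetric] using w w'
    by (simp add: field_simps)
qed




definition mob :: "real \<Rightarrow> real \<Rightarrow> real \<Rightarrow> real \<Rightarrow> complex \<Rightarrow> complex" where
  "mob a b c d z = (of_real a * z + of_real b) / (of_real c * z + of_real d)"

lemma mob_den_nz:
  assumes "a * d - b * c = 1" "Im z \<noteq> 0"
  shows "of_real c * z + of_real d \<noteq> 0"
proof
  assume h: "of_real c * z + of_real d = 0"
  hence "Im (of_real c * z + of_real d) = 0" by simp
  hence "c * Im z = 0" by simp
  hence c0: "c = 0" using assms(2) by simp
  from h have "Re (of_real c * z + of_real d) = 0" by simp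
  hence "d = 0" using c0 by simp
  thus False using assms(1) c0 by simp
qed

lemma mob_diff:
  assumes "a * d - b * c = 1"
    and "of_real c * z1 + of_real d \<noteq> 0" "of_real c * z2 + of_real d \<noteq> 0"
  shows "mob a b c d z1 - mob a b c d z2 = (z1 - z2) / ((of_real c * z1 + of_real d) * (of_real c * z2 + of_real d))"
proof -
  have det: "(of_real a * of_real d - of_real b * of_real c :: complex) = 1"
    using assms(1) by (metis of_real_1 of_real_diff of_real_mult)
  have "mob a b c d z1 - mob a b c d z2
     = ((of_real a * z1 + of_real b) * (of_real c * z2 + of_real d) - (of_real a * z2 + of_real b) * (of_real c * z1 + of_real d))
       / ((of_real c * z1 + of_real d) * (of_real c * z2 + of_real d))"
    unfolding mob_def using assms(2,3) by (simp add: field_simps)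
  also have "(of_real a * z1 + of_real b) * (of_real c * z2 + of_real d) - (of_real a * z2 + of_real b) * (of_real c * z1 + of_real d)
     = (of_real a * of_real d - of_real b * of_real c) * (z1 - z2)" by (simp add: algebra_simps)
  finally show ?thesis using det by simp
qed

lemma mob_cnj: "mob a b c d (cnj z) = cnj (mob a b c d z)"
  unfolding mob_def by simp

lemma Im_mob:
  assumes "a * d - b * c = 1" "Im z \<noteq> 0"
  shows "Im (mob a b c d z) = Im z / (cmod (of_real c * z + of_real d))^2"
proof -
  have n1: "of_real c * z + of_real d \<noteq> 0" using mob_den_nz[OF assms] .
  have n2: "of_real c * cnj z + of_real d \<noteq> 0" using mob_den_nz[OF assms(1)] assms(2) by simp
  have "mob a b c d z - mob a b c d (cnj z) = (z - cnj z) / ((of_real c * z + of_real d) * (of_real c * cnj z + of_real d))"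
    using mob_diff[OF assms(1) n1 n2] .
  also have "(of_real c * z + of_real d) * (of_real c * cnj z + of_real d) = of_real ((cmod (of_real c * z + of_real d))^2)"
  proof -
    have "(of_real c * cnj z + of_real d) = cnj (of_real c * z + of_real d)" by simp
    thus ?thesis by (simp only: complex_norm_square)
  qed
  finally have h: "mob a b c d z - cnj (mob a b c d z) = (z - cnj z) / of_real ((cmod (of_real c * z + of_real d))^2)"
    by (simp add: mob_cnj)
  have "Im (mob a b c d z - cnj (mob a b c d z)) = 2 * Im (mob a b c d z)" by simp
  moreover have "Im ((z - cnj z) / of_real ((cmod (of_real c * z + of_real d))^2)) = 2 * Im z / (cmod (of_real c * z + of_real d))^2"
    by (simp add: Im_divide_of_real)
  ultimately show ?thesis using h by simp
qed

lemma frac_sub: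
  assumes "(Dn::complex) \<noteq> 0"
  shows "(a * (N / Dn) + b) / (c * (N / Dn) + d) = (a * N + b * Dn) / (c * N + d * Dn)"
proof -
  have "a * (N / Dn) + b = (a * N + b * Dn) / Dn" "c * (N / Dn) + d = (c * N + d * Dn) / Dn"
    using assms by (simp_all add: field_simps)
  thus ?thesis using assms by simp
qed

lemma mob_inv:
  assumes "a * d - b * c = 1" "Im w \<noteq> 0"
  shows "mob a b c d (mob d (- b) (- c) a w) = w"
proof -
  have det1: "d * a - (- b) * (- c) = 1" using assms(1) by (simp add: algebra_simps)
  have n: "of_real (- c) * w + of_real a \<noteq> 0" using mob_den_nz[OF det1 assms(2)] .
  have det: "(of_real a * of_real d - of_real b * of_real c :: complex) = 1"
    using assms(1) by (metis of_real_1 of_real_diff of_real_mult)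
  have "mob a b c d (mob d (- b) (- c) a w)
     = (of_real a * (of_real d * w - of_real b) + of_real b * (- of_real c * w + of_real a))
       / (of_real c * (of_real d * w - of_real b) + of_real d * (- of_real c * w + of_real a))"
    unfolding mob_def using n by (subst frac_sub) (simp_all add: algebra_simps)
  also have "of_real a * (of_real d * w - of_real b) + of_real b * (- of_real c * w + of_real a)
      = (of_real a * of_real d - of_real b * of_real c) * w" by (simp add: algebra_simps)
  also have "of_real c * (of_real d * w - of_real b) + of_real d * (- of_real c * w + of_real a)
      = (of_real a * of_real d - of_real b * of_real c :: complex)" by (simp add: algebra_simps)
  finally show ?thesis using det by simp
qed

definition crd :: "complex \<Rightarrow> complex \<Rightarrow> complex \<Rightarrow> complex \<Rightarrow> complex" where
  "crd z1 z2 z3 z4 = 1 - 2 * (((z1 - z3) * (z2 - z4)) / ((z1 - z2) * (z3 - z4)))"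

lemma ratio_cancel:
  fixes A B Cc D g1 g2 g3 g4 :: complex
  assumes "g1 \<noteq> 0" "g2 \<noteq> 0" "g3 \<noteq> 0" "g4 \<noteq> 0" "Cc \<noteq> 0" "D \<noteq> 0"
  shows "(A / (g1 * g3)) * (B / (g2 * g4)) / ((Cc / (g1 * g2)) * (D / (g3 * g4))) = (A * B) / (Cc * D)"
  using assms by (simp add: field_simps)

lemma ratio_cancel2:
  fixes A B Cc D y :: complex
  assumes "y \<noteq> 0"
  shows "(y * A) * (y * B) / ((y * Cc) * (y * D)) = (A * B) / (Cc * D)"
proof -
  have "(y * A) * (y * B) = (y * y) * (A * B)" "(y * Cc) * (y * D) = (y * y) * (Cc * D)" by (simp_all add: ac_simps)
  thus ?thesis using assms by simp
qed

lemma crd_mob: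
  assumes det: "a * d - b * c = 1"
    and n: "of_real c * z1 + of_real d \<noteq> 0" "of_real c * z2 + of_real d \<noteq> 0"
       "of_real c * z3 + of_real d \<noteq> 0" "of_real c * z4 + of_real d \<noteq> 0"
    and ne: "z1 \<noteq> z2" "z3 \<noteq> z4"
  shows "crd (mob a b c d z1) (mob a b c d z2) (mob a b c d z3) (mob a b c d z4) = crd z1 z2 z3 z4"
  unfolding crd_def mob_diff[OF det n(1) n(3)] mob_diff[OF det n(2) n(4)]
    mob_diff[OF det n(1) n(2)] mob_diff[OF det n(3) n(4)]
  using ne by (subst ratio_cancel) (use n in auto)

lemma crd_aff:
  assumes "(y :: complex) \<noteq> 0"
  shows "crd (x + y * z1) (x + y * z2) (x + y * z3) (x + y * z4) = crd z1 z2 z3 z4"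
proof -
  have "(x + y * z1) - (x + y * z3) = y * (z1 - z3)" "(x + y * z2) - (x + y * z4) = y * (z2 - z4)"
    "(x + y * z1) - (x + y * z2) = y * (z1 - z2)" "(x + y * z3) - (x + y * z4) = y * (z3 - z4)"
    by (simp_all add: algebra_simps)
  thus ?thesis unfolding crd_def using ratio_cancel2[OF assms] by simp
qed

lemma coshdist_crd:
  assumes "Im z \<noteq> 0" "snd P \<noteq> 0"
  shows "coshdist z P = crd z (cnj z) (ZZ P) (ZZt P)"
proof -
  obtain X Y where P: "P = (X, Y)" by (cases P)
  have Y: "Y \<noteq> 0" using assms(2) P by simp
  have z: "z = of_real (Re z) + \<i> * of_real (Im z)" by (simp add: complex_eq_iff)
  have e1: "(z - ZZ P) * (cnj z - ZZt P) = (of_real (Re z) - X)^2 + (of_real (Im z) - Y)^2"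
    unfolding P ZZ_def ZZt_def by (subst (1 2) z) (simp add: algebra_simps power2_eq_square)
  have e2: "(z - cnj z) * (ZZ P - ZZt P) = - 4 * of_real (Im z) * Y"
    unfolding P ZZ_def ZZt_def by (subst (1 2) z) (simp add: algebra_simps power2_eq_square)
  have "crd z (cnj z) (ZZ P) (ZZt P) = 1 - 2 * (((of_real (Re z) - X)^2 + (of_real (Im z) - Y)^2) / (- 4 * of_real (Im z) * Y))"
    unfolding crd_def e1 e2 ..
  also have "\<dots> = coshdist z P"
    unfolding coshdist_def P using Y assms(1) by (simp add: field_simps)
  finally show ?thesis ..
qed



lemma cis_half: "cis th = (of_real (cos (th/2)) + \<i> * of_real (sin (th/2)))^2"
proof -
  have "cis th = cis (th/2) * cis (th/2)" by (simp add: cis_mult)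
  also have "cis (th/2) = of_real (cos (th/2)) + \<i> * of_real (sin (th/2))" by (simp add: complex_eq_iff)
  finally show ?thesis by (simp add: power2_eq_square)
qed

lemma a0_eq:
  fixes s th :: real
  assumes s: "0 \<le> s" "s < 1"
  defines "C \<equiv> cos (th/2)" and "S \<equiv> sin (th/2)"
  shows "a0 s th = mob S (- C) C S (\<i> * of_real (1 + s))"
proof -
  have CS: "(of_real C)^2 + (of_real S)^2 = (1::complex)"
    unfolding C_def S_def by (metis of_real_add of_real_power of_real_1 sin_cos_squared_add2 add.commute)
  have ii: "\<i> * \<i> = -1" by simp
  have e: "cis th = (of_real C + \<i> * of_real S)^2" unfolding C_def S_def by (rule cis_half)
  have det: "S * S - (- C) * C = 1" unfolding C_def S_def
    by (metis add.commute minus_mult_left diff_minus_eq_add power2_eq_square sin_cos_squared_add3)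
  have d1: "(2 + of_real s + of_real s * cis th :: complex) \<noteq> 0" using den_a0_nz[OF s(1)] .
  have d2: "of_real C * (\<i> * of_real (1 + s)) + of_real S \<noteq> 0"
    using mob_den_nz[OF det, of "\<i> * of_real (1 + s)"] s by simp
  show ?thesis unfolding a0_def mob_def
  proof (subst frac_eq_eq[OF d1 d2])
    show "\<i> * (2 + of_real s - of_real s * cis th) * (of_real C * (\<i> * of_real (1 + s)) + of_real S) =
      (of_real S * (\<i> * of_real (1 + s)) + of_real (- C)) * (2 + of_real s + of_real s * cis th)"
      unfolding e of_real_add of_real_minus of_real_1 using CS ii by algebra
  qed
qed

lemma b0_eq:
  fixes s th :: real
  assumes s: "0 \<le> s" "s < 1"
  defines "C \<equiv> cos (th/2)" and "S \<equiv> sin (th/2)"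
  shows "b0 s th = mob S (- C) C S (- \<i> * of_real (1 - s))"
proof -
  have CS: "(of_real C)^2 + (of_real S)^2 = (1::complex)"
    unfolding C_def S_def by (metis of_real_add of_real_power of_real_1 sin_cos_squared_add2 add.commute)
  have ii: "\<i> * \<i> = -1" by simp
  have e: "cnj (cis th) = (of_real C - \<i> * of_real S)^2" unfolding C_def S_def
    by (subst cis_half) simp
  have det: "S * S - (- C) * C = 1" unfolding C_def S_def
    by (metis add.commute minus_mult_left diff_minus_eq_add power2_eq_square sin_cos_squared_add3)
  have d1: "(2 - of_real s - of_real s * cnj (cis th) :: complex) \<noteq> 0" using den_b0_nz[OF s] .
  have d2: "of_real C * (- \<i> * of_real (1 - s)) + of_real S \<noteq> 0"
    using mob_den_nz[OF det, of "- \<i> * of_real (1 - s)"] s by simp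
  show ?thesis unfolding b0_def mob_def
  proof (subst frac_eq_eq[OF d1 d2])
    show "- \<i> * (2 - of_real s + of_real s * cnj (cis th)) * (of_real C * (- \<i> * of_real (1 - s)) + of_real S) =
      (of_real S * (- \<i> * of_real (1 - s)) + of_real (- C)) * (2 - of_real s - of_real s * cnj (cis th))"
      unfolding e of_real_diff of_real_minus of_real_1 using CS ii by algebra
  qed
qed



definition Cc :: "real \<Rightarrow> real" where "Cc th = cos (th/2)"
definition Ss :: "real \<Rightarrow> real" where "Ss th = sin (th/2)"
definition psi :: "real \<Rightarrow> complex \<Rightarrow> complex" where "psi th = mob (Ss th) (Cc th) (- Cc th) (Ss th)"
definition gam :: "real \<Rightarrow> complex \<Rightarrow> complex" where "gam th z = of_real (- Cc th) * z + of_real (Ss th)"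

lemma det_psi: "Ss th * Ss th - Cc th * (- Cc th) = 1"
  unfolding Ss_def Cc_def by (metis add.commute diff_minus_eq_add minus_mult_right power2_eq_square sin_cos_squared_add3)
lemma det_psiinv: "Ss th * Ss th - (- Cc th) * Cc th = 1"
  using det_psi[of th] by simp

lemma gam_nz: "Im z \<noteq> 0 \<Longrightarrow> gam th z \<noteq> 0"
  unfolding gam_def using mob_den_nz[OF det_psi] by blast

lemma psi_diff: "Im z1 \<noteq> 0 \<Longrightarrow> Im z2 \<noteq> 0 \<Longrightarrow> psi th z1 - psi th z2 = (z1 - z2) / (gam th z1 * gam th z2)"
  unfolding psi_def gam_def using mob_diff[OF det_psi] mob_den_nz[OF det_psi] by blast

lemma Im_psi: "Im z \<noteq> 0 \<Longrightarrow> Im (psi th z) = Im z / (cmod (gam th z))^2"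
  unfolding psi_def gam_def using Im_mob[OF det_psi] by blast

lemma psi_cnj: "psi th (cnj z) = cnj (psi th z)"
  unfolding psi_def by (rule mob_cnj)

lemma psi_i: "psi th \<i> = \<i>"
proof -
  have d: "of_real (- Cc th) * \<i> + of_real (Ss th) \<noteq> 0" using mob_den_nz[OF det_psi, of \<i>] by simp
  have "(of_real (Ss th) * \<i> + of_real (Cc th)) = \<i> * (of_real (- Cc th) * \<i> + of_real (Ss th))"
    by (simp add: algebra_simps)
  thus ?thesis unfolding psi_def mob_def using d by simp
qed

lemma a0_props:
  fixes s :: real assumes s: "0 \<le> s" "s < 1"
  shows "Im (a0 s th) > 0" "psi th (a0 s th) = \<i> * of_real (1 + s)"
proof -
  have e: "a0 s th = mob (Ss th) (- Cc th) (Cc th) (Ss th) (\<i> * of_real (1 + s))"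
    using a0_eq[OF s, of th] unfolding Ss_def Cc_def .
  have im: "Im (\<i> * of_real (1 + s)) \<noteq> 0" using s by simp
  have nz: "of_real (Cc th) * (\<i> * of_real (1 + s)) + of_real (Ss th) \<noteq> 0"
    using mob_den_nz[OF det_psiinv im] .
  show "Im (a0 s th) > 0" unfolding e Im_mob[OF det_psiinv im] using s nz by simp
  show "psi th (a0 s th) = \<i> * of_real (1 + s)"
    unfolding e psi_def using mob_inv[OF det_psi im] by simp
qed

lemma b0_props:
  fixes s :: real assumes s: "0 \<le> s" "s < 1"
  shows "Im (b0 s th) < 0" "psi th (b0 s th) = - \<i> * of_real (1 - s)"
proof -
  have e: "b0 s th = mob (Ss th) (- Cc th) (Cc th) (Ss th) (- \<i> * of_real (1 - s))"
    using b0_eq[OF s, of th] unfolding Ss_def Cc_def .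
  have im: "Im (- \<i> * of_real (1 - s)) \<noteq> 0" using s by simp
  have nz: "of_real (Cc th) * (- \<i> * of_real (1 - s)) + of_real (Ss th) \<noteq> 0"
    using mob_den_nz[OF det_psiinv im] .
  show "Im (b0 s th) < 0" unfolding e Im_mob[OF det_psiinv im] using s nz
    by (simp add: divide_neg_pos)
  show "psi th (b0 s th) = - \<i> * of_real (1 - s)"
    unfolding e psi_def using mob_inv[OF det_psi im] by simp
qed

lemma crd_Re:
  fixes s :: real assumes "Im w > 0"
  shows "Re (crd w (cnj w) (\<i> * of_real (1 + s)) (- \<i> * of_real (1 - s)))
       = ((Re w)^2 + (Im w)^2 + 1 - s^2) / (2 * Im w)"
proof -
  obtain u v where w: "w = Complex u v" by (cases w)
  have v: "v > 0" using assms w by simp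
  define Q where "Q = (w - \<i> * of_real (1 + s)) * (cnj w - - \<i> * of_real (1 - s))"
  have den: "(w - cnj w) * (\<i> * of_real (1 + s) - - \<i> * of_real (1 - s)) = of_real (- 4 * v)"
    unfolding w by (simp add: complex_eq_iff)
  have "crd w (cnj w) (\<i> * of_real (1 + s)) (- \<i> * of_real (1 - s)) = 1 - 2 * (Q / of_real (- 4 * v))"
    unfolding crd_def Q_def den ..
  also have "\<dots> = 1 + Q / of_real (2 * v)" using v by (simp add: field_simps)
  finally have c: "crd w (cnj w) (\<i> * of_real (1 + s)) (- \<i> * of_real (1 - s)) = 1 + Q / of_real (2 * v)" .
  have ReQ: "Re Q = u^2 + v^2 - 2 * v + 1 - s^2"
    unfolding Q_def w by (simp add: algebra_simps power2_eq_square)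
  show ?thesis unfolding c using v w ReQ by (simp add: Re_divide_of_real field_simps power2_eq_square)
qed




definition kfun :: "real \<Rightarrow> complex \<Rightarrow> real" where
  "kfun s w = cmod (w + \<i> * of_real (1 - s)) / cmod (w + \<i> * of_real (1 + s))
     * exp (- ct s * (((Re w)^2 + (Im w)^2 + 1 - s^2) / (2 * Im w)))"

definition Kc :: "real \<Rightarrow> real \<Rightarrow> real" where
  "Kc s th = cmod (gam th (b0 s th)) / cmod (gam th (a0 s th))"

lemma snd_eq: "snd P = (ZZ P - ZZt P) / (2 * \<i>)"
  unfolding ZZ_def ZZt_def by (simp add: field_simps)

lemma key_identity:
  fixes s th :: real
  assumes s: "0 < s" "s < 1" and z: "Im z > 0" and z': "Im z' > 0"
  defines "P \<equiv> hor z' th (- \<i> * of_real s)"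
  defines "m \<equiv> (z - of_real (Re z')) / of_real (Im z')"
  shows "cmod (Kt s z P) = Kc s th * kfun s (psi th m)"
    and "Im (psi th m) > 0"
    and "cmod (z - ZZt P) \<noteq> 0" and "cmod (cnj z - ZZ P) \<noteq> 0"
proof -
  define x' where "x' = Re z'"
  define y' where "y' = Im z'"
  have y'p: "y' > 0" using z' y'_def by simp
  have s0: "0 \<le> s" using s by simp
  define w where "w = psi th m"
  have Imm: "Im m > 0" unfolding m_def using z y'p y'_def by (simp add: Im_divide_of_real)
  have hz: "z = of_real x' + of_real y' * m" unfolding m_def x'_def y'_def using y'p y'_def by simp
  have hzc: "cnj z = of_real x' + of_real y' * cnj m" unfolding m_def x'_def y'_def using y'p y'_def by simp
  have ZZP: "ZZ P = of_real x' + of_real y' * a0 s th" unfolding P_def x'_def y'_def using hor_ZZ(1)[OF s0 s(2)] .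
  have ZZtP: "ZZt P = of_real x' + of_real y' * b0 s th" unfolding P_def x'_def y'_def using hor_ZZ(2)[OF s0 s(2)] .
  have a0: "Im (a0 s th) > 0" "psi th (a0 s th) = \<i> * of_real (1 + s)" using a0_props[OF s0 s(2)] by auto
  have b0: "Im (b0 s th) < 0" "psi th (b0 s th) = - \<i> * of_real (1 - s)" using b0_props[OF s0 s(2)] by auto
  have ab: "a0 s th \<noteq> b0 s th" using a0 b0 by auto
  have sndP: "snd P \<noteq> 0"
  proof -
    have "ZZ P - ZZt P = of_real y' * (a0 s th - b0 s th)" unfolding ZZP ZZtP by (simp add: algebra_simps)
    hence "ZZ P - ZZt P \<noteq> 0" using y'p ab by simp
    thus ?thesis unfolding snd_eq[of P] by simp
  qed
  have Imw: "Im w > 0" unfolding w_def using Im_psi[of m th] Imm gam_nz[of m th] by simp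
  thus "Im (psi th m) > 0" unfolding w_def .
  have cd: "coshdist z P = crd w (cnj w) (\<i> * of_real (1 + s)) (- \<i> * of_real (1 - s))"
  proof -
    have "coshdist z P = crd z (cnj z) (ZZ P) (ZZt P)" using coshdist_crd z sndP by simp
    also have "\<dots> = crd (of_real x' + of_real y' * m) (of_real x' + of_real y' * cnj m)
        (of_real x' + of_real y' * a0 s th) (of_real x' + of_real y' * b0 s th)"
      by (metis hz hzc ZZP ZZtP)
    also have "\<dots> = crd m (cnj m) (a0 s th) (b0 s th)"
      using y'p by (intro crd_aff) simp
    also have "\<dots> = crd (psi th m) (psi th (cnj m)) (psi th (a0 s th)) (psi th (b0 s th))"
      unfolding psi_def using Imm a0 b0 ab
      by (intro crd_mob[symmetric] det_psi mob_den_nz[OF det_psi]) (auto simp: complex_eq_iff)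
    finally show ?thesis unfolding a0 b0 psi_cnj w_def .
  qed
  have ReK: "Re (- of_real (ct s) * coshdist z P) = - ct s * (((Re w)^2 + (Im w)^2 + 1 - s^2) / (2 * Im w))"
    unfolding cd using crd_Re[OF Imw, of s] by simp
  have N: "z - ZZt P = of_real y' * (m - b0 s th)" unfolding hz ZZtP by (simp add: algebra_simps)
  have D: "cnj z - ZZ P = of_real y' * (cnj m - a0 s th)" unfolding hzc ZZP by (simp add: algebra_simps)
  have gm: "gam th m \<noteq> 0" "gam th (cnj m) \<noteq> 0" "gam th (a0 s th) \<noteq> 0" "gam th (b0 s th) \<noteq> 0"
    using gam_nz Imm a0 b0 by auto
  have pd1: "psi th m - psi th (b0 s th) = (m - b0 s th) / (gam th m * gam th (b0 s th))"
    using psi_diff[of m "b0 s th" th] Imm b0(1) by auto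
  have mN: "m - b0 s th = (w - psi th (b0 s th)) * (gam th m * gam th (b0 s th))"
    unfolding w_def pd1 using gm by simp
  have pd2: "psi th (cnj m) - psi th (a0 s th) = (cnj m - a0 s th) / (gam th (cnj m) * gam th (a0 s th))"
    using psi_diff[of "cnj m" "a0 s th" th] Imm a0(1) by auto
  have mD: "cnj m - a0 s th = (cnj w - psi th (a0 s th)) * (gam th (cnj m) * gam th (a0 s th))"
    unfolding w_def psi_cnj[symmetric] pd2 using gm by simp
  have gcnj: "cmod (gam th (cnj m)) = cmod (gam th m)"
  proof -
    have "gam th (cnj m) = cnj (gam th m)" unfolding gam_def by simp
    thus ?thesis by simp
  qed
  have cw: "cmod (cnj w - \<i> * of_real (1 + s)) = cmod (w + \<i> * of_real (1 + s))"
  proof -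
    have "cnj w - \<i> * of_real (1 + s) = cnj (w + \<i> * of_real (1 + s))" by simp
    thus ?thesis by (metis complex_mod_cnj)
  qed
  have cN: "cmod (z - ZZt P) = y' * (cmod (w + \<i> * of_real (1 - s)) * (cmod (gam th m) * cmod (gam th (b0 s th))))"
    unfolding N mN b0 using y'p by (simp add: norm_mult)
  have cD: "cmod (cnj z - ZZ P) = y' * (cmod (w + \<i> * of_real (1 + s)) * (cmod (gam th m) * cmod (gam th (a0 s th))))"
    unfolding D mD a0 cw[symmetric] gcnj[symmetric] using y'p by (simp add: norm_mult)
  have wne: "w + \<i> * of_real (1 + s) \<noteq> 0" using Imw s by (auto simp: complex_eq_iff)
  have wne2: "w + \<i> * of_real (1 - s) \<noteq> 0" using Imw s by (auto simp: complex_eq_iff)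
  show "cmod (z - ZZt P) \<noteq> 0" unfolding cN using y'p wne2 gm by simp
  show "cmod (cnj z - ZZ P) \<noteq> 0" unfolding cD using y'p wne gm by simp
  have "cmod (Kt s z P) = cmod (z - ZZt P) / cmod (cnj z - ZZ P) * exp (Re (- of_real (ct s) * coshdist z P))"
    unfolding Kt_def by (simp add: norm_mult norm_divide)
  also have "\<dots> = Kc s th * kfun s w"
    unfolding cN cD ReK Kc_def kfun_def using y'p gm wne by (simp add: field_simps)
  finally show "cmod (Kt s z P) = Kc s th * kfun s (psi th m)" unfolding w_def .
qed




lemma kfun_pos: fixes s :: real assumes "0 < s" "s < 1" "Im w > 0" shows "kfun s w > 0"
proof -
  have "w + \<i> * of_real (1 - s) \<noteq> 0" "w + \<i> * of_real (1 + s) \<noteq> 0"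
    using assms by (auto simp: complex_eq_iff)
  thus ?thesis unfolding kfun_def by simp
qed

lemma ln_kfun:
  fixes s :: real assumes s: "0 < s" "s < 1" and w: "Im w > 0"
  shows "2 * ln (kfun s w) = ln (((Re w)^2 + (Im w + 1 - s)^2) / ((Re w)^2 + (Im w + 1 + s)^2))
      - ct s * (((Re w)^2 + (Im w)^2 + 1 - s^2) / Im w)"
proof -
  define a where "a = (Re w)^2 + (Im w + 1 - s)^2"
  define b where "b = (Re w)^2 + (Im w + 1 + s)^2"
  have ap: "a > 0" unfolding a_def using s w by (simp add: add_nonneg_pos)
  have bp: "b > 0" unfolding b_def using s w by (simp add: add_nonneg_pos)
  have ca: "cmod (w + \<i> * of_real (1 - s)) = sqrt a" unfolding a_def by (simp add: cmod_def algebra_simps)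
  have cb: "cmod (w + \<i> * of_real (1 + s)) = sqrt b" unfolding b_def by (simp add: cmod_def algebra_simps)
  have "ln (kfun s w) = ln (sqrt a / sqrt b) + (- ct s * (((Re w)^2 + (Im w)^2 + 1 - s^2) / (2 * Im w)))"
    unfolding kfun_def ca cb using ap bp by (subst ln_mult) auto
  also have "ln (sqrt a / sqrt b) = ln a / 2 - ln b / 2" using ap bp by (simp add: ln_div ln_sqrt)
  finally have "2 * ln (kfun s w) = ln a - ln b - ct s * (((Re w)^2 + (Im w)^2 + 1 - s^2) / Im w)"
    using w by (simp add: field_simps)
  moreover have "ln (a / b) = ln a - ln b" using ap bp by (simp add: ln_div)
  ultimately show ?thesis unfolding a_def b_def by simp
qed

lemma kfun_le:
  fixes s :: real assumes s: "0 < s" "s < 1" and w: "Im w > 0"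
  shows "kfun s w \<le> kfun s \<i>"
proof -
  have "ln (((Re w)^2 + (Im w + 1 - s)^2) / ((Re w)^2 + (Im w + 1 + s)^2))
      - ct s * (((Re w)^2 + (Im w)^2 + 1 - s^2) / Im w)
      \<le> ln ((2 - s)^2 / (2 + s)^2) - ct s * (2 - s^2)"
    using key_ineq[of "(Re w)^2" "Im w" s] s w by (simp add: add_ac)
  also have "ln ((2 - s)^2 / (2 + s)^2) - ct s * (2 - s^2) = 2 * ln (kfun s \<i>)"
    using ln_kfun[OF s, of \<i>] by (simp add: algebra_simps)
  finally have "2 * ln (kfun s w) \<le> 2 * ln (kfun s \<i>)" using ln_kfun[OF s w] by simp
  hence "ln (kfun s w) \<le> ln (kfun s \<i>)" by simp
  thus ?thesis using kfun_pos[OF s w] kfun_pos[OF s, of \<i>] by simp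
qed




definition Phi :: "real \<Rightarrow> complex \<times> cpt \<Rightarrow> complex" where
  "Phi t p = Ln (fst p - ZZt (snd p)) - Ln (cnj (fst p) - ZZ (snd p)) - of_real (ct t) * coshdist (fst p) (snd p)"

lemma G1_props:
  assumes "P \<in> G1" shows "Im (ZZ P) > 0" "Im (ZZt P) < 0"
proof -
  obtain z th s where P: "P = hor z th (- \<i> * of_real s)" and s: "s \<in> {0..<1}" and z: "z \<in> Hpl"
    using assms unfolding G1_def by blast
  have s0: "0 \<le> s" "s < 1" using s by auto
  have zi: "Im z > 0" using z unfolding Hpl_def by simp
  show "Im (ZZ P) > 0" unfolding P hor_ZZ(1)[OF s0] using a0_props(1)[OF s0, of th] zi by simp
  show "Im (ZZt P) < 0" unfolding P hor_ZZ(2)[OF s0] using b0_props(1)[OF s0, of th] zi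
    by (simp add: mult_pos_neg)
qed

lemma Phi_cont: "continuous_on (Hpl \<times> G1) (Phi t)"
proof -
  have ZZc: "continuous_on S (\<lambda>p. ZZ (snd p))" "continuous_on S (\<lambda>p. ZZt (snd p))" for S :: "(complex \<times> cpt) set"
    unfolding ZZ_def ZZt_def by (intro continuous_intros)+
  have mem: "Im (fst p) > 0" "Im (ZZ (snd p)) > 0" "Im (ZZt (snd p)) < 0" if "p \<in> Hpl \<times> G1" for p
    using that G1_props unfolding Hpl_def by auto
  have sndnz: "snd (snd p) \<noteq> 0" if "p \<in> Hpl \<times> G1" for p
  proof -
    have "Im (ZZ (snd p) - ZZt (snd p)) > 0" using mem[OF that] by simp
    hence "ZZ (snd p) - ZZt (snd p) \<noteq> 0" by auto
    thus ?thesis using snd_eq[of "snd p"] by auto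
  qed
  show ?thesis unfolding Phi_def coshdist_def
    apply (intro continuous_intros ZZc)
    subgoal for p using mem[of p] by (auto simp: complex_nonpos_Reals_iff)
    subgoal for p using mem[of p] by (auto simp: complex_nonpos_Reals_iff)
    subgoal proof
      fix p assume p: "p \<in> Hpl \<times> G1"
      show "2 * complex_of_real (Im (fst p)) * snd (snd p) \<noteq> 0" using mem[OF p] sndnz[OF p] by simp
    qed
    done
qed

lemma Phi_exp:
  assumes "z \<in> Hpl" "P \<in> G1" shows "exp (Phi t (z, P)) = Kt t z P"
proof -
  have i: "Im z > 0" using assms unfolding Hpl_def by simp
  have n1: "z - ZZt P \<noteq> 0" using i G1_props(2)[OF assms(2)] by (auto simp: complex_eq_iff)
  have n2: "cnj z - ZZ P \<noteq> 0" using i G1_props(1)[OF assms(2)] by (auto simp: complex_eq_iff)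
  have "exp (Phi t (z, P)) = exp (Ln (z - ZZt P)) / exp (Ln (cnj z - ZZ P)) / exp (of_real (ct t) * coshdist z P)"
    unfolding Phi_def by (simp add: exp_diff)
  also have "\<dots> = (z - ZZt P) / (cnj z - ZZ P) / exp (of_real (ct t) * coshdist z P)"
    using n1 n2 by simp
  also have "\<dots> = Kt t z P" unfolding Kt_def by (simp add: exp_minus divide_inverse)
  finally show ?thesis .
qed




lemma d_quad: "((\<lambda>w. (Re w)^2 + (Im w + c)^2) has_derivative (\<lambda>k. 2 * Re w * Re k + 2 * (Im w + c) * Im k)) (at w)"
  by (auto intro!: derivative_eq_intros simp: algebra_simps)

lemma d_lnquad: assumes "(Re w)^2 + (Im w + c)^2 > 0"
  shows "((\<lambda>w. ln ((Re w)^2 + (Im w + c)^2)) has_derivative (\<lambda>k. (2 * Re w * Re k + 2 * (Im w + c) * Im k) / ((Re w)^2 + (Im w + c)^2))) (at w)"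
  using has_derivative_ln[OF assms d_quad[of c w]] by (simp add: divide_inverse mult.commute)

lemma d_g3: assumes "Im w \<noteq> 0"
  shows "((\<lambda>w. ((Re w)^2 + (Im w)^2 + e) / (2 * Im w)) has_derivative
     (\<lambda>k. ((2 * Re w * Re k + 2 * Im w * Im k) * (2 * Im w) - ((Re w)^2 + (Im w)^2 + e) * (2 * Im k)) / (2 * Im w)^2)) (at w)"
  using assms by (auto intro!: derivative_eq_intros simp: power2_eq_square field_simps)


definition Lc :: "real \<Rightarrow> complex \<Rightarrow> real" where
  "Lc s w = (ln ((Re w)^2 + (Im w + (1 - s))^2) - ln ((Re w)^2 + (Im w + (1 + s))^2)) / 2
     - ct s * (((Re w)^2 + (Im w)^2 + (1 - s^2)) / (2 * Im w))"
definition Lu :: "real \<Rightarrow> complex \<Rightarrow> real" where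
  "Lu s w = Re w / ((Re w)^2 + (Im w + (1 - s))^2) - Re w / ((Re w)^2 + (Im w + (1 + s))^2) - ct s * (Re w / Im w)"
definition Lv :: "real \<Rightarrow> complex \<Rightarrow> real" where
  "Lv s w = (Im w + (1 - s)) / ((Re w)^2 + (Im w + (1 - s))^2) - (Im w + (1 + s)) / ((Re w)^2 + (Im w + (1 + s))^2)
     - ct s * (((Im w)^2 - (Re w)^2 - (1 - s^2)) / (2 * (Im w)^2))"

lemmas has_derivative_div_const = bounded_linear.has_derivative[OF bounded_linear_divide]

lemma lin_eq1: fixes a u x p y :: real assumes "a \<noteq> 0" shows "(2 * u * x + 2 * p * y) / a / 2 = u / a * x + p / a * y"
  using assms by (simp add: field_simps)
lemma lin_eq3: fixes u v x y e :: real assumes "v \<noteq> 0"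
  shows "((2 * u * x + 2 * v * y) * (2 * v) - (u^2 + v^2 + e) * (2 * y)) / (2 * v)^2
    = u / v * x + (v^2 - u^2 - e) / (2 * v^2) * y"
  using assms by (simp add: field_simps power2_eq_square)

lemma Lc_deriv:
  fixes s :: real assumes s: "0 < s" "s < 1" and w: "Im w > 0"
  shows "(Lc s has_derivative (\<lambda>k. Lu s w * Re k + Lv s w * Im k)) (at w)"
proof -
  have ap: "(Re w)^2 + (Im w + (1 - s))^2 > 0" using s w by (simp add: add_nonneg_pos)
  have bp: "(Re w)^2 + (Im w + (1 + s))^2 > 0" using s w by (simp add: add_nonneg_pos)
  have "(Lc s has_derivative (\<lambda>k. ((2 * Re w * Re k + 2 * (Im w + (1 - s)) * Im k) / ((Re w)^2 + (Im w + (1 - s))^2)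
      - (2 * Re w * Re k + 2 * (Im w + (1 + s)) * Im k) / ((Re w)^2 + (Im w + (1 + s))^2)) / 2
      - ct s * (((2 * Re w * Re k + 2 * Im w * Im k) * (2 * Im w) - ((Re w)^2 + (Im w)^2 + (1 - s^2)) * (2 * Im k)) / (2 * Im w)^2))) (at w)"
    unfolding Lc_def
    by (intro has_derivative_diff has_derivative_mult_right d_lnquad d_g3 ap bp has_derivative_div_const) (use w in simp)
  moreover have "(\<lambda>k. ((2 * Re w * Re k + 2 * (Im w + (1 - s)) * Im k) / ((Re w)^2 + (Im w + (1 - s))^2)
      - (2 * Re w * Re k + 2 * (Im w + (1 + s)) * Im k) / ((Re w)^2 + (Im w + (1 + s))^2)) / 2
      - ct s * (((2 * Re w * Re k + 2 * Im w * Im k) * (2 * Im w) - ((Re w)^2 + (Im w)^2 + (1 - s^2)) * (2 * Im k)) / (2 * Im w)^2))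
    = (\<lambda>k. Lu s w * Re k + Lv s w * Im k)"
  proof
    fix k
    show "((2 * Re w * Re k + 2 * (Im w + (1 - s)) * Im k) / ((Re w)^2 + (Im w + (1 - s))^2)
      - (2 * Re w * Re k + 2 * (Im w + (1 + s)) * Im k) / ((Re w)^2 + (Im w + (1 + s))^2)) / 2
      - ct s * (((2 * Re w * Re k + 2 * Im w * Im k) * (2 * Im w) - ((Re w)^2 + (Im w)^2 + (1 - s^2)) * (2 * Im k)) / (2 * Im w)^2)
      = Lu s w * Re k + Lv s w * Im k"
    proof -
      have A: "(Re w)^2 + (Im w + (1 - s))^2 \<noteq> 0" using ap by linarith
      have B: "(Re w)^2 + (Im w + (1 + s))^2 \<noteq> 0" using bp by linarith
      have V: "Im w \<noteq> 0" using w by simp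
      note e1 = lin_eq1[OF A, of "Re w" "Re k" "Im w + (1 - s)" "Im k"]
      note e2 = lin_eq1[OF B, of "Re w" "Re k" "Im w + (1 + s)" "Im k"]
      note e3 = lin_eq3[OF V, of "Re w" "Re k" "Im k" "1 - s^2"]
      show ?thesis unfolding diff_divide_distrib[of _ _ "2::real"] e1 e2 e3 Lu_def Lv_def
        by (simp add: algebra_simps)
    qed
  qed
  ultimately show ?thesis by simp
qed


definition Luu :: "real \<Rightarrow> real" where "Luu s = 1 / (2 - s)^2 - 1 / (2 + s)^2 - ct s"
definition Lvv :: "real \<Rightarrow> real" where "Lvv s = - 1 / (2 - s)^2 + 1 / (2 + s)^2 - ct s * (1 - s^2)"

lemma hh1: "(X::real) \<noteq> 0 \<Longrightarrow> a * X^2 / X^4 = a / X^2"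
  by (simp add: power4_eq_xxxx power2_eq_square)
lemma hh2: "(X::real) \<noteq> 0 \<Longrightarrow> (a * X^2 - X * (2 * a * X)) / X^4 = - a / X^2"
  by (simp add: power4_eq_xxxx power2_eq_square field_simps)

lemma Lu_i: "Lu s \<i> = 0" unfolding Lu_def by simp

lemma Lv_i: assumes "0 < s" "s < 1" shows "Lv s \<i> = 0"
proof -
  have s2: "s^2 < 1" using assms by (simp add: power_less_one_iff abs_less_iff)
  have a: "(2 - s) \<noteq> 0" "(2 + s) \<noteq> 0" "4 - s^2 \<noteq> 0" using assms s2 by auto
  have "Lv s \<i> = 1 / (2 - s) - 1 / (2 + s) - ct s * (s^2 / 2)"
    unfolding Lv_def using a by (simp add: power2_eq_square)
  also have "\<dots> = 0" unfolding ct_alt using assms a by (simp add: field_simps power2_eq_square)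
  finally show ?thesis .
qed

lemma Lu_deriv_i:
  fixes s :: real assumes s: "0 < s" "s < 1"
  shows "(Lu s has_derivative (\<lambda>k. Luu s * Re k)) (at \<i>)"
proof -
  have a: "(2 - s) \<noteq> 0" "(2 + s) \<noteq> 0" using s by auto
  show ?thesis unfolding Lu_def Luu_def
    using a apply (auto intro!: derivative_eq_intros)
    by (rule ext) (simp only: hh1 hh2 a, simp add: algebra_simps)
qed

lemma Lv_deriv_i:
  fixes s :: real assumes s: "0 < s" "s < 1"
  shows "(Lv s has_derivative (\<lambda>k. Lvv s * Im k)) (at \<i>)"
proof -
  have a: "(2 - s) \<noteq> 0" "(2 + s) \<noteq> 0" using s by auto
  show ?thesis unfolding Lv_def Lvv_def
    using a apply (auto intro!: derivative_eq_intros)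
    by (rule ext) (simp only: hh1 hh2 a, simp add: algebra_simps diff_divide_distrib)
qed



definition mm :: "complex \<Rightarrow> real \<times> real \<Rightarrow> complex" where
  "mm z0 q = (z0 - of_real (fst q)) / of_real (snd q)"
definition WW :: "real \<Rightarrow> complex \<Rightarrow> real \<times> real \<Rightarrow> complex" where
  "WW th z0 q = psi th (mm z0 q)"
definition dpsi :: "real \<Rightarrow> complex \<Rightarrow> complex" where
  "dpsi th z = 1 / (gam th z)^2"
definition kap :: "real \<Rightarrow> complex \<Rightarrow> real \<times> real \<Rightarrow> complex" where
  "kap th z0 q = - dpsi th (mm z0 q) / of_real (snd q)"

lemma psi_deriv:
  assumes "Im z \<noteq> 0" shows "(psi th has_field_derivative dpsi th z) (at z)"
proof -
  have g: "gam th z \<noteq> 0" using gam_nz[OF assms] .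
  have CS: "(of_real (Ss th))^2 + (of_real (Cc th))^2 = (1::complex)"
    using det_psi[of th] by (metis mult_minus_right diff_minus_eq_add of_real_1 of_real_add of_real_mult power2_eq_square)
  have "((\<lambda>z. (of_real (Ss th) * z + of_real (Cc th)) / (of_real (- Cc th) * z + of_real (Ss th))) has_field_derivative
      ((of_real (Ss th) * (of_real (- Cc th) * z + of_real (Ss th)) - (of_real (Ss th) * z + of_real (Cc th)) * of_real (- Cc th))
        / (of_real (- Cc th) * z + of_real (Ss th))^2)) (at z)"
    using g unfolding gam_def by (auto intro!: derivative_eq_intros simp: power2_eq_square)
  moreover have "(of_real (Ss th) * (of_real (- Cc th) * z + of_real (Ss th)) - (of_real (Ss th) * z + of_real (Cc th)) * of_real (- Cc th))
      = (of_real (Ss th))^2 + (of_real (Cc th))^2"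
    by (simp add: algebra_simps power2_eq_square)
  ultimately show ?thesis unfolding psi_def mob_def dpsi_def gam_def[symmetric] CS by simp
qed

lemma mm_deriv:
  assumes "snd q \<noteq> 0"
  shows "(mm z0 has_derivative (\<lambda>h. - (of_real (fst h) + mm z0 q * of_real (snd h)) / of_real (snd q))) (at q)"
proof -
  have "(mm z0 has_derivative (\<lambda>h. ((- of_real (fst h)) * of_real (snd q) - (z0 - of_real (fst q)) * of_real (snd h)) / (of_real (snd q))^2)) (at q)"
    unfolding mm_def using assms
    by (auto intro!: derivative_eq_intros simp: power2_eq_square field_simps)
  moreover have "(\<lambda>h. ((- of_real (fst h)) * of_real (snd q) - (z0 - of_real (fst q)) * of_real (snd h)) / (of_real (snd q))^2)
     = (\<lambda>h. - (of_real (fst h) + mm z0 q * of_real (snd h)) / of_real (snd q))"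
    unfolding mm_def using assms by (intro ext) (simp add: field_simps power2_eq_square)
  ultimately show ?thesis by simp
qed

lemma WW_deriv:
  assumes "snd q \<noteq> 0" "Im (mm z0 q) \<noteq> 0"
  shows "(WW th z0 has_derivative (\<lambda>h. kap th z0 q * (of_real (fst h) + mm z0 q * of_real (snd h)))) (at q)"
proof -
  have "((\<lambda>q. psi th (mm z0 q)) has_derivative (\<lambda>h. dpsi th (mm z0 q) * (- (of_real (fst h) + mm z0 q * of_real (snd h)) / of_real (snd q)))) (at q)"
    using has_derivative_compose[OF mm_deriv[OF assms(1)] has_field_derivative_imp_has_derivative[OF psi_deriv[OF assms(2)]]]
    by (simp add: mult.commute)
  moreover have "(\<lambda>h. dpsi th (mm z0 q) * (- (of_real (fst h) + mm z0 q * of_real (snd h)) / of_real (snd q)))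
     = (\<lambda>h. kap th z0 q * (of_real (fst h) + mm z0 q * of_real (snd h)))"
    unfolding kap_def by (intro ext) (simp add: algebra_simps minus_divide_left[symmetric] diff_divide_distrib add_divide_distrib)
  ultimately show ?thesis unfolding WW_def by simp
qed




lemma Luu_neg: assumes "0 < s" "s < 1" shows "Luu s < 0"
proof -
  have s2: "s^2 < 1" using assms by (simp add: power_less_one_iff abs_less_iff)
  have p: "0 < 4 - s^2" "0 < 2 - s" "0 < 2 + s" using s2 assms by auto
  have q: "(4 - s^2)^2 = (2 - s)^2 * (2 + s)^2" by algebra
  have "1 / (2 - s)^2 - 1 / (2 + s)^2 = (1 * (2 + s)^2 - 1 * (2 - s)^2) / ((2 - s)^2 * (2 + s)^2)"
    using p by (intro diff_frac_eq) auto
  also have "1 * (2 + s)^2 - 1 * (2 - s)^2 = 8 * s" by algebra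
  finally have e: "1 / (2 - s)^2 - 1 / (2 + s)^2 = 8 * s / (4 - s^2)^2" unfolding q .
  have "8 * s / (4 - s^2)^2 < 4 / (s * (4 - s^2))"
  proof -
    have e1: "8 * s * (s * (4 - s^2)) = 32 * s^2 - 8 * (s^2)^2" by algebra
    have e2: "4 * (4 - s^2)^2 = 64 - 32 * s^2 + 4 * (s^2)^2" by algebra
    have "0 \<le> (s^2)^2" by simp
    hence "8 * s * (s * (4 - s^2)) < 4 * (4 - s^2)^2" unfolding e1 e2 using s2 by linarith
    thus ?thesis using p assms by (simp add: field_simps)
  qed
  thus ?thesis unfolding Luu_def e ct_alt by simp
qed

lemma Lvv_neg: assumes "0 < s" "s < 1" shows "Lvv s < 0"
proof -
  have s2: "s^2 < 1" using assms by (simp add: power_less_one_iff abs_less_iff)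
  have p: "0 < 4 - s^2" "0 < 2 - s" "0 < 2 + s" using s2 assms by auto
  have "(2 - s)^2 < (2 + s)^2" using assms by (simp add: power2_eq_square algebra_simps)
  hence "1 / (2 + s)^2 < 1 / (2 - s)^2" using p by (simp add: field_simps)
  moreover have "0 < ct s * (1 - s^2)" unfolding ct_alt using p s2 assms by simp
  ultimately show ?thesis unfolding Lvv_def by simp
qed

lemma Lc_ln_kfun: assumes "0 < s" "s < 1" "Im w > 0" shows "Lc s w = ln (kfun s w)"
proof -
  define a where "a = (Re w)^2 + (Im w + 1 - s)^2"
  define b where "b = (Re w)^2 + (Im w + 1 + s)^2"
  have ap: "a > 0" "b > 0" unfolding a_def b_def using assms by (simp_all add: add_nonneg_pos)
  have lab: "ln (a / b) = ln a - ln b" using ap by (simp add: ln_div)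
  have "2 * ln (kfun s w) = ln ((Re w)^2 + (Im w + 1 - s)^2) - ln ((Re w)^2 + (Im w + 1 + s)^2)
      - ct s * (((Re w)^2 + (Im w)^2 + 1 - s^2) / Im w)"
    using ln_kfun[OF assms] lab unfolding a_def b_def by simp
  thus ?thesis unfolding Lc_def using assms by (simp add: field_simps)
qed

lemma bl_fst: "bounded_linear (fst :: real \<times> real \<Rightarrow> real)" by (rule bounded_linear_fst)
lemma bl_snd: "bounded_linear (snd :: real \<times> real \<Rightarrow> real)" by (rule bounded_linear_snd)

lemma dpsi_aux: "(g::complex) \<noteq> 0 \<Longrightarrow> - (2 * g * c) / (g^2)^2 = 2 * (- c) / g^3"
  by (simp add: field_simps power2_eq_square power3_eq_cube)

lemma dpsi_deriv:
  assumes "gam th z \<noteq> 0"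
  shows "\<exists>D. (dpsi th has_field_derivative D) (at z)"
proof -
  have "(\<lambda>z. 1 / (of_real (- Cc th) * z + of_real (Ss th))^2) field_differentiable (at z)"
    using assms unfolding gam_def
    by (intro field_differentiable_divide field_differentiable_const field_differentiable_power
        field_differentiable_add field_differentiable_mult field_differentiable_ident) auto
  thus ?thesis unfolding dpsi_def gam_def field_differentiable_def .
qed

lemma hess_part:
  fixes t th :: real
  assumes t: "0 < t" "t < 1" and z0: "z0 \<in> Hpl"
  shows "nondeg_hessian_at (\<lambda>(x, y). Re (Phi t (z0, hor (Complex x y) th (- \<i> * of_real t)))) (Re z0, Im z0)"
proof -
  define f where "f = (\<lambda>(x, y). Re (Phi t (z0, hor (Complex x y) th (- \<i> * of_real t))))"
  define p where "p = (Re z0, Im z0)"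
  have y0: "Im z0 > 0" using z0 unfolding Hpl_def by simp
  define W where "W = WW th z0"
  define kp where "kp = kap th z0"
  define m where "m = mm z0"
  define Fx where "Fx q = Lu t (W q) * Re (kp q) + Lv t (W q) * Im (kp q)" for q
  define Fy where "Fy q = Lu t (W q) * Re (kp q * m q) + Lv t (W q) * Im (kp q * m q)" for q
  define L1 where "L1 = Blinfun (fst :: real \<times> real \<Rightarrow> real)"
  define L2 where "L2 = Blinfun (snd :: real \<times> real \<Rightarrow> real)"
  have L1a: "blinfun_apply L1 = fst" unfolding L1_def by (rule bounded_linear_Blinfun_apply[OF bl_fst])
  have L2a: "blinfun_apply L2 = snd" unfolding L2_def by (rule bounded_linear_Blinfun_apply[OF bl_snd])
  define D where "D q = Fx q *\<^sub>R L1 + Fy q *\<^sub>R L2" for q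
  have Dapp: "blinfun_apply (D q) = (\<lambda>h. Fx q * fst h + Fy q * snd h)" for q
    unfolding D_def by (rule ext) (simp add: L1a L2a blinfun.add_left blinfun.scaleR_left)
  have Im_m: "Im (m q) > 0" if "snd q > 0" for q
    unfolding m_def mm_def using that y0 by (simp add: Im_divide_of_real)
  have Im_W: "Im (W q) > 0" if "snd q > 0" for q
  proof -
    have "Im (W q) = Im (m q) / (cmod (gam th (m q)))^2"
      unfolding W_def WW_def m_def[symmetric] using Im_psi Im_m[OF that] by simp
    thus ?thesis using Im_m[OF that] gam_nz[of "m q" th] by simp
  qed
  have Kcp: "Kc t th > 0"
  proof -
    have "gam th (b0 t th) \<noteq> 0" "gam th (a0 t th) \<noteq> 0"
      using gam_nz a0_props(1)[of t th] b0_props(1)[of t th] t by auto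
    thus ?thesis unfolding Kc_def by simp
  qed
  have f_eq: "f q = ln (Kc t th) + Lc t (W q)" if q: "snd q > 0" for q
  proof -
    obtain x y where qq: "q = (x, y)" by (cases q)
    have y: "y > 0" using q qq by simp
    define z' where "z' = Complex x y"
    have z'H: "z' \<in> Hpl" unfolding z'_def Hpl_def using y by simp
    define P where "P = hor z' th (- \<i> * of_real t)"
    have PG: "P \<in> G1" unfolding P_def G1_def using z'H t by force
    have "f q = Re (Phi t (z0, P))" unfolding f_def qq P_def z'_def by simp
    also have "\<dots> = ln (cmod (exp (Phi t (z0, P))))" by (simp add: norm_exp_eq_Re)
    also have "\<dots> = ln (cmod (Kt t z0 P))" using Phi_exp[OF z0 PG] by simp
    also have "cmod (Kt t z0 P) = Kc t th * kfun t (psi th ((z0 - of_real (Re z')) / of_real (Im z')))"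
      unfolding P_def using key_identity(1)[OF t y0, of z' th] y z'_def by simp
    also have "psi th ((z0 - of_real (Re z')) / of_real (Im z')) = W q"
      unfolding W_def WW_def mm_def qq z'_def by simp
    also have "ln (Kc t th * kfun t (W q)) = ln (Kc t th) + ln (kfun t (W q))"
      using Kcp kfun_pos[OF t Im_W[OF q]] by (simp add: ln_mult)
    also have "ln (kfun t (W q)) = Lc t (W q)" using Lc_ln_kfun[OF t Im_W[OF q]] by simp
    finally show ?thesis .
  qed
  have Wd: "(W has_derivative (\<lambda>h. kp q * (of_real (fst h) + m q * of_real (snd h)))) (at q)" if "snd q > 0" for q
    unfolding W_def kp_def m_def using WW_deriv[of q z0 th] that Im_m[OF that] unfolding m_def by simp
  have fd: "(f has_derivative blinfun_apply (D q)) (at q)" if q: "snd q > 0" for q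
  proof -
    have g: "((\<lambda>q. ln (Kc t th) + Lc t (W q)) has_derivative
        (\<lambda>h. 0 + (Lu t (W q) * Re (kp q * (of_real (fst h) + m q * of_real (snd h)))
              + Lv t (W q) * Im (kp q * (of_real (fst h) + m q * of_real (snd h)))))) (at q)"
      by (intro has_derivative_add has_derivative_const has_derivative_compose[OF Wd[OF q] Lc_deriv[OF t Im_W[OF q]]])
    have e: "(\<lambda>h. 0 + (Lu t (W q) * Re (kp q * (of_real (fst h) + m q * of_real (snd h)))
              + Lv t (W q) * Im (kp q * (of_real (fst h) + m q * of_real (snd h))))) = blinfun_apply (D q)"
      unfolding Dapp Fx_def Fy_def by (rule ext) (simp add: algebra_simps)
    have oH: "open {q :: real \<times> real. snd q > 0}" by (intro open_Collect_less continuous_intros)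
    have "(f has_derivative blinfun_apply (D q)) (at q within UNIV)"
      by (rule has_derivative_transform_within_open[OF g[unfolded e] oH]) (use q f_eq in auto)
    thus ?thesis by simp
  qed
  have ev: "\<forall>\<^sub>F q in nhds p. (f has_derivative blinfun_apply (D q)) (at q)"
  proof -
    have "open {q :: real \<times> real. snd q > 0}" by (intro open_Collect_less continuous_intros)
    moreover have "p \<in> {q. snd q > 0}" unfolding p_def using y0 by simp
    ultimately have "\<forall>\<^sub>F q in nhds p. q \<in> {q. snd q > 0}" by (rule eventually_nhds_in_open)
    thus ?thesis by eventually_elim (use fd in simp)
  qed
  have pm: "m p = \<i>" unfolding m_def mm_def p_def using y0 by (simp add: complex_eq_iff)
  have pW: "W p = \<i>" unfolding W_def WW_def m_def[symmetric] pm psi_i ..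
  have p0: "snd p > 0" unfolding p_def using y0 by simp
  define kk where "kk = kp p"
  define Wp where "Wp h = kk * (of_real (fst h) + \<i> * of_real (snd h))" for h
  have Wdp: "(W has_derivative Wp) (at p)" using Wd[OF p0] unfolding Wp_def kk_def pm .
  have Lud: "((\<lambda>q. Lu t (W q)) has_derivative (\<lambda>k. Luu t * Re (Wp k))) (at p)"
    by (rule has_derivative_compose[OF Wdp, of "Lu t", unfolded pW, OF Lu_deriv_i[OF t]])
  have Lvd: "((\<lambda>q. Lv t (W q)) has_derivative (\<lambda>k. Lvv t * Im (Wp k))) (at p)"
    by (rule has_derivative_compose[OF Wdp, of "Lv t", unfolded pW, OF Lv_deriv_i[OF t]])
  have kpd: "\<exists>K. (kp has_derivative K) (at p)"
  proof -
    have gnz: "gam th (mm z0 p) \<noteq> 0" using gam_nz Im_m[OF p0] unfolding m_def by simp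
    obtain Dd where Dd: "(dpsi th has_field_derivative Dd) (at (mm z0 p))" using dpsi_deriv[OF gnz] by blast
    have F: "((\<lambda>q. - dpsi th (mm z0 q)) has_derivative
        (\<lambda>h. - (Dd * (- (of_real (fst h) + mm z0 p * of_real (snd h)) / of_real (snd p))))) (at p)"
      by (intro has_derivative_minus has_derivative_compose[OF mm_deriv has_field_derivative_imp_has_derivative[OF Dd]])
         (use p0 in auto)
    have G: "((\<lambda>q. of_real (snd q) :: complex) has_derivative (\<lambda>h. of_real (snd h))) (at p)"
      by (auto intro!: derivative_eq_intros)
    have nz: "(of_real (snd p) :: complex) \<noteq> 0" using p0 by simp
    have "kp = (\<lambda>q. - dpsi th (mm z0 q) / of_real (snd q))" unfolding kp_def kap_def by (rule ext) simp
    thus ?thesis using has_derivative_divide[OF F G nz] by blast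
  qed
  then obtain K where Kd: "(kp has_derivative K) (at p)" by blast
  have mcont: "\<exists>M. (m has_derivative M) (at p)"
    using mm_deriv[of p z0] p0 unfolding m_def by auto
  then obtain M where Md: "(m has_derivative M) (at p)" by blast
  have kmd: "((\<lambda>q. kp q * m q) has_derivative (\<lambda>h. kp p * M h + K h * m p)) (at p)"
    by (rule has_derivative_mult[OF Kd Md])
  define Fx' where "Fx' k = Luu t * Re (Wp k) * Re kk + Lvv t * Im (Wp k) * Im kk" for k
  define Fy' where "Fy' k = Luu t * Re (Wp k) * Re (kk * \<i>) + Lvv t * Im (Wp k) * Im (kk * \<i>)" for k
  have Fxd: "(Fx has_derivative Fx') (at p)"
  proof -
    have "(Fx has_derivative (\<lambda>k. (Lu t (W p) * Re (K k) + Luu t * Re (Wp k) * Re (kp p))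
           + (Lv t (W p) * Im (K k) + Lvv t * Im (Wp k) * Im (kp p)))) (at p)"
      unfolding Fx_def
      by (intro has_derivative_add has_derivative_mult Lud Lvd has_derivative_Re has_derivative_Im Kd)
    thus ?thesis unfolding pW Lu_i Lv_i[OF t] Fx'_def kk_def by simp
  qed
  have Fyd: "(Fy has_derivative Fy') (at p)"
  proof -
    have "(Fy has_derivative (\<lambda>k. (Lu t (W p) * Re (kp p * M k + K k * m p) + Luu t * Re (Wp k) * Re (kp p * m p))
           + (Lv t (W p) * Im (kp p * M k + K k * m p) + Lvv t * Im (Wp k) * Im (kp p * m p)))) (at p)"
      unfolding Fy_def
      by (intro has_derivative_add has_derivative_mult Lud Lvd has_derivative_Re has_derivative_Im kmd)
    thus ?thesis unfolding pW Lu_i Lv_i[OF t] Fy'_def kk_def pm by simp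
  qed
  define H where "H k = Fx' k *\<^sub>R L1 + Fy' k *\<^sub>R L2" for k
  have Dd: "(D has_derivative H) (at p)"
  proof -
    have "((\<lambda>q. Fx q *\<^sub>R L1 + Fy q *\<^sub>R L2) has_derivative
        (\<lambda>k. (Fx p *\<^sub>R 0 + Fx' k *\<^sub>R L1) + (Fy p *\<^sub>R 0 + Fy' k *\<^sub>R L2))) (at p)"
      by (intro has_derivative_add has_derivative_scaleR Fxd Fyd has_derivative_const)
    moreover have "(\<lambda>q. Fx q *\<^sub>R L1 + Fy q *\<^sub>R L2) = D" unfolding D_def ..
    moreover have "(\<lambda>k. (Fx p *\<^sub>R 0 + Fx' k *\<^sub>R L1) + (Fy p *\<^sub>R 0 + Fy' k *\<^sub>R L2)) = H"
      unfolding H_def by (rule ext) simp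
    ultimately show ?thesis by simp
  qed
  have Happ: "blinfun_apply (H k) h = Fx' k * fst h + Fy' k * snd h" for k h
    unfolding H_def by (simp add: L1a L2a blinfun.add_left blinfun.scaleR_left)
  have kk_nz: "kk \<noteq> 0"
  proof -
    have "gam th \<i> \<noteq> 0" using gam_nz[of \<i> th] by simp
    thus ?thesis unfolding kk_def kp_def kap_def dpsi_def m_def[symmetric] pm using p0 by simp
  qed
  have det: "Fx' (1, 0) * Fy' (0, 1) - Fy' (1, 0) * Fx' (0, 1) = Luu t * Lvv t * ((Re kk)^2 + (Im kk)^2)^2"
    unfolding Fx'_def Fy'_def Wp_def by (simp add: algebra_simps power2_eq_square)
  have "Luu t * Lvv t * ((Re kk)^2 + (Im kk)^2)^2 \<noteq> 0"
  proof -
    have "(Re kk)^2 + (Im kk)^2 \<noteq> 0" using kk_nz by (simp add: complex_eq_iff add_nonneg_eq_0_iff)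
    thus ?thesis using Luu_neg[OF t] Lvv_neg[OF t] by simp
  qed
  hence "blinfun_apply (H (1,0)) (1,0) * blinfun_apply (H (0,1)) (0,1)
          - blinfun_apply (H (1,0)) (0,1) * blinfun_apply (H (0,1)) (1,0) \<noteq> 0"
    unfolding Happ using det by simp
  hence "nondeg_hessian_at f p" unfolding nondeg_hessian_at_def using ev Dd by blast
  thus ?thesis unfolding f_def p_def .
qed



theorem lemma1:
  fixes t :: real
  assumes "0 < t" and "t < 1"
  shows "(\<exists>\<Phi> :: complex \<times> cpt \<Rightarrow> complex.
            continuous_on (Hpl \<times> G1) \<Phi> \<and>
            (\<forall>z\<in>Hpl. \<forall>P\<in>G1. exp (\<Phi> (z, P)) = Kt t z P) \<and>
            (\<forall>z0\<in>Hpl. \<forall>th :: real.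
               nondeg_hessian_at
                 (\<lambda>(x, y). Re (\<Phi> (z0, hor (Complex x y) th (- \<i> * of_real t))))
                 (Re z0, Im z0)))
       \<and> (\<forall>z\<in>Hpl. \<forall>th :: real.
            hor z th (- \<i> * of_real t) \<in> Sigma_ht t th \<and>
            (\<forall>P\<in>Sigma_ht t th. cmod (Kt t z P) \<le> cmod (Kt t z (hor z th (- \<i> * of_real t)))))"
proof (intro conjI)
  show "\<exists>\<Phi> :: complex \<times> cpt \<Rightarrow> complex.
            continuous_on (Hpl \<times> G1) \<Phi> \<and>
            (\<forall>z\<in>Hpl. \<forall>P\<in>G1. exp (\<Phi> (z, P)) = Kt t z P) \<and>
            (\<forall>z0\<in>Hpl. \<forall>th :: real.
               nondeg_hessian_at
                 (\<lambda>(x, y). Re (\<Phi> (z0, hor (Complex x y) th (- \<i> * of_real t))))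
                 (Re z0, Im z0))"
    using Phi_cont Phi_exp hess_part assms by blast
  show "\<forall>z\<in>Hpl. \<forall>th :: real.
            hor z th (- \<i> * of_real t) \<in> Sigma_ht t th \<and>
            (\<forall>P\<in>Sigma_ht t th. cmod (Kt t z P) \<le> cmod (Kt t z (hor z th (- \<i> * of_real t))))"
  proof (intro ballI allI conjI)
    fix z th assume z: "z \<in> Hpl"
    show "hor z th (- \<i> * of_real t) \<in> Sigma_ht t th" unfolding Sigma_ht_def using z by blast
    have zi: "Im z > 0" using z unfolding Hpl_def by simp
    have mi: "(z - of_real (Re z)) / of_real (Im z) = \<i>" using zi by (simp add: complex_eq_iff)
    fix P assume "P \<in> Sigma_ht t th"
    then obtain z' where P: "P = hor z' th (- \<i> * of_real t)" and z': "z' \<in> Hpl"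
      unfolding Sigma_ht_def by blast
    have z'i: "Im z' > 0" using z' unfolding Hpl_def by simp
    have "cmod (Kt t z P) = Kc t th * kfun t (psi th ((z - of_real (Re z')) / of_real (Im z')))"
      unfolding P using key_identity(1)[OF assms zi z'i] .
    also have "\<dots> \<le> Kc t th * kfun t \<i>"
      using kfun_le[OF assms key_identity(2)[OF assms zi z'i]] unfolding Kc_def
      by (intro mult_left_mono) auto
    also have "\<dots> = cmod (Kt t z (hor z th (- \<i> * of_real t)))"
      using key_identity(1)[OF assms zi zi] unfolding mi psi_i by simp
    finally show "cmod (Kt t z P) \<le> cmod (Kt t z (hor z th (- \<i> * of_real t)))" .
  qed
qed


end
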